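(* Let $s>-1$. For every $\varepsilon>0$ there exists $R>0$ such that $$\sup_{n\in\mathbb N}\int_R^{+\infty}K^{(n,s)}(x,x)\,dx<\varepsilon .$$
   Context: For $s>-1$ and $n\in\mathbb N$, let $L^{(s,n)}\subset L_2((0,+\infty),dx)$ be the $n$-dimensional subspace spanned by the functions $$x\mapsto \frac{1}{(n^2x+1)^{s/2+1}}\left(\frac{n^2x-1}{n^2x+1}\right)^{l},\qquad l=0,1,\dots,n-1,$$ and let $K^{(n,s)}(x,y)$ be the (continuous) kernel of the orthogonal projection of $L_2((0,+\infty),dx)$ onto $L^{(s,n)}$; thus $K^{(n,s)}(x,x)=\sum_{l}|e_l(x)|^2$ for any orthonormal basis $(e_l)$ of $L^{(s,n)}$. Equivalently, $K^{(n,s)}(x,y)=n^2\hat K_n^{(s)}(n^2x,n^2y)$, where $\hat K_n^{(s)}$ is the Christoffel–Darboux kernel of the Jacobi polynomials for the weight $(1-u)^s$ on $[-1,1]$ transported by the change of variable $u=(\lambda-1)/(\lambda+1)$. *)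

theory Defs
  imports "HOL-Analysis.Analysis"
begin

definition basis_fun :: "nat \<Rightarrow> real \<Rightarrow> nat \<Rightarrow> real \<Rightarrow> real" where
  "basis_fun n s l x =
     ((real n)^2 * x + 1) powr (-(s/2 + 1)) * (((real n)^2 * x - 1) / ((real n)^2 * x + 1)) ^ l"

text \<open>e_0,...,e_{n-1} is an orthonormal family in L_2((0,+inf)) lying in L^(s,n)
  (hence, by dimension count, an orthonormal basis of L^(s,n)).\<close>
definition is_onb :: "nat \<Rightarrow> real \<Rightarrow> (nat \<Rightarrow> real \<Rightarrow> real) \<Rightarrow> bool" where
  "is_onb n s e \<longleftrightarrow>
     (\<forall>i<n. \<exists>c :: nat \<Rightarrow> real. \<forall>x>0. e i x = (\<Sum>l<n. c l * basis_fun n s l x)) \<and>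
     (\<forall>i<n. \<forall>j<n. set_integrable lborel {0<..} (\<lambda>x. e i x * e j x) \<and>
        (LINT x:{0<..}|lborel. e i x * e j x) = (if i = j then 1 else 0))"

text \<open>Diagonal of the projection kernel: K^(n,s)(x,x) = sum_l |e_l(x)|^2.\<close>
definition Kdiag :: "nat \<Rightarrow> real \<Rightarrow> real \<Rightarrow> real" where
  "Kdiag n s x = (let e = (SOME e. is_onb n s e) in \<Sum>l<n. (e l x)^2)"

end

theory Submission
  imports Defs "HOL-Computational_Algebra.Polynomial" "HOL-Real_Asymp.Real_Asymp"
begin


lemma alt_pascal:
  fixes f :: "nat \<Rightarrow> real"
  shows "(\<Sum>b\<le>Suc k. real (Suc k choose b) * (-1)^b * f b) =
         (\<Sum>b\<le>k. real (k choose b) * (-1)^b * (f b - f (Suc b)))"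
proof -
  have "(\<Sum>b\<le>Suc k. real (Suc k choose b) * (-1)^b * f b) =
        (\<Sum>b\<le>Suc k. real (k choose b) * (-1)^b * f b) +
        (\<Sum>b\<le>Suc k. (if b = 0 then 0 else real (k choose (b - 1))) * (-1)^b * f b)"
    by (subst sum.distrib[symmetric], rule sum.cong)
       (auto simp: algebra_simps gr0_conv_Suc)
  also have "(\<Sum>b\<le>Suc k. real (k choose b) * (-1)^b * f b) = (\<Sum>b\<le>k. real (k choose b) * (-1)^b * f b)"
    by simp
  also have "(\<Sum>b\<le>Suc k. (if b = 0 then 0 else real (k choose (b - 1))) * (-1)^b * f b)
      = (\<Sum>b\<le>k. real (k choose b) * (-1)^(Suc b) * f (Suc b))"
    by (subst sum.atMost_Suc_shift) simp
  finally show ?thesis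
    by (simp add: sum_subtractf[symmetric] algebra_simps sum.distrib[symmetric])
qed

lemma degree_shift_diff:
  fixes q :: "real poly"
  assumes "degree q > 0"
  shows "q - pcompose q [:1,1:] = 0 \<or> degree (q - pcompose q [:1,1:]) < degree q"
proof -
  let ?d = "q - pcompose q [:1,1:]"
  have dc: "degree (pcompose q [:1,1:]) = degree q" by (simp add: degree_pcompose)
  have lc: "lead_coeff (pcompose q [:1,1:]) = lead_coeff q" by (simp add: lead_coeff_comp)
  have "degree ?d \<le> degree q" using dc by (metis degree_diff_le le_refl)
  moreover have "coeff ?d (degree q) = 0" using lc dc by simp
  ultimately show ?thesis
    by (metis assms le_neq_implies_less leading_coeff_0_iff)
qed

lemma fin_diff_poly:
  fixes q :: "real poly"
  assumes "degree q < k"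
  shows "(\<Sum>b\<le>k. real (k choose b) * (-1)^b * poly q (real b)) = 0"
  using assms
proof (induction k arbitrary: q)
  case 0 then show ?case by simp
next
  case (Suc k)
  let ?d = "q - pcompose q [:1,1:]"
  have eq: "poly q (real b) - poly q (real (Suc b)) = poly ?d (real b)" for b
    by (simp add: poly_pcompose algebra_simps)
  have "(\<Sum>b\<le>Suc k. real (Suc k choose b) * (-1)^b * poly q (real b)) =
        (\<Sum>b\<le>k. real (k choose b) * (-1)^b * poly ?d (real b))"
    by (subst alt_pascal) (simp only: eq)
  also have "\<dots> = 0"
  proof (cases "?d = 0")
    case True then show ?thesis by simp
  next
    case False
    have "degree q > 0"
    proof (rule ccontr)
      assume "\<not> 0 < degree q"
      then obtain c where "q = [:c:]" by (metis degree_eq_zeroE neq0_conv)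
      then have "?d = 0" by (simp add: pcompose_pCons)
      with False show False by simp
    qed
    then have "degree ?d < degree q" using degree_shift_diff False by blast
    with Suc.prems show ?thesis by (intro Suc.IH) simp
  qed
  finally show ?case .
qed

lemma alt_inv_sum:
  fixes y :: real
  assumes "y > 0"
  shows "(\<Sum>b\<le>k. real (k choose b) * (-1)^b * (1 / (y + real b))) = fact k / pochhammer y (Suc k)"
  using assms
proof (induction k arbitrary: y)
  case 0 then show ?case by simp
next
  case (Suc k)
  have "(\<Sum>b\<le>Suc k. real (Suc k choose b) * (-1)^b * (1 / (y + real b))) =
        (\<Sum>b\<le>k. real (k choose b) * (-1)^b * (1 / (y + real b))) -
        (\<Sum>b\<le>k. real (k choose b) * (-1)^b * (1 / ((y + 1) + real b)))"
    by (subst alt_pascal) (simp add: sum_subtractf[symmetric] algebra_simps)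
  also have "\<dots> = fact k / pochhammer y (Suc k) - fact k / pochhammer (y+1) (Suc k)"
    using Suc by simp
  also have "\<dots> = fact (Suc k) / pochhammer y (Suc (Suc k))"
  proof -
    define A where "A = pochhammer (y+1) k"
    have A: "A > 0" unfolding A_def using Suc.prems by (intro pochhammer_pos) simp
    have e1: "pochhammer y (Suc k) = y * A" unfolding A_def by (simp add: pochhammer_rec)
    have e2: "pochhammer (y+1) (Suc k) = A * (y + 1 + real k)" unfolding A_def by (simp add: pochhammer_Suc)
    have e3: "pochhammer y (Suc (Suc k)) = y * A * (y + 1 + real k)"
      using e1 by (simp add: pochhammer_Suc algebra_simps)
    have "y + 1 + real k > 0" using Suc.prems by simp
    then show ?thesis using A Suc.prems unfolding e1 e2 e3
      by (simp add: divide_simps) (simp add: algebra_simps)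
  qed
  finally show ?case .
qed

lemma alt_poly_sum:
  fixes y :: real and p :: "real poly"
  assumes "y > 0" "degree p \<le> k"
  shows "(\<Sum>b\<le>k. real (k choose b) * (-1)^b * (poly p (real b) / (y + real b)))
           = poly p (-y) * fact k / pochhammer y (Suc k)"
proof -
  define c where "c = poly p (-y)"
  have "poly (p - [:c:]) (-y) = 0" by (simp add: c_def)
  then have "[:y, 1:] dvd (p - [:c:])" using poly_eq_0_iff_dvd[of "p - [:c:]" "-y"] by simp
  then obtain q where q: "p - [:c:] = [:y, 1:] * q" by (elim dvdE)
  have dq: "q = 0 \<or> degree q < k"
  proof (cases "q = 0")
    case False
    have "degree ([:y, 1:] * q) = 1 + degree q" using False by (subst degree_mult_eq) auto
    moreover have "degree (p - [:c:]) \<le> k" using assms(2)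
      by (intro degree_diff_le) auto
    ultimately show ?thesis using q by simp
  qed simp
  have pt: "poly p (real b) / (y + real b) = poly q (real b) + c * (1 / (y + real b))" for b
  proof -
    have "poly p (real b) = (y + real b) * poly q (real b) + c"
      using arg_cong[OF q, of "\<lambda>r. poly r (real b)"] by (simp add: algebra_simps)
    then show ?thesis using assms(1) by (simp add: field_simps)
  qed
  have "(\<Sum>b\<le>k. real (k choose b) * (-1)^b * (poly p (real b) / (y + real b)))
      = (\<Sum>b\<le>k. real (k choose b) * (-1)^b * poly q (real b))
        + c * (\<Sum>b\<le>k. real (k choose b) * (-1)^b * (1 / (y + real b)))"
    unfolding pt by (simp add: sum.distrib sum_distrib_left algebra_simps)
  also have "(\<Sum>b\<le>k. real (k choose b) * (-1)^b * poly q (real b)) = 0"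
    using dq fin_diff_poly by auto
  also have "(\<Sum>b\<le>k. real (k choose b) * (-1)^b * (1 / (y + real b))) = fact k / pochhammer y (Suc k)"
    using alt_inv_sum assms(1) by blast
  finally show ?thesis by (simp add: c_def)
qed

definition cJ :: "real \<Rightarrow> nat \<Rightarrow> nat \<Rightarrow> real" where
  "cJ s k a = real (k choose a) * (-1)^a * pochhammer (s + real a + 1) k"

definition pJ :: "real \<Rightarrow> nat \<Rightarrow> real poly" where
  "pJ s k = (\<Prod>r<k. [:s + 1 + real r, 1:])"

lemma poly_pJ: "poly (pJ s k) x = pochhammer (s + x + 1) k"
  by (simp add: pJ_def poly_prod pochhammer_prod algebra_simps atLeast0LessThan)

lemma degree_pJ: "degree (pJ s k) = k"
  unfolding pJ_def by (subst degree_prod_eq_sum_degree) auto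

lemma inner_b:
  assumes "s > -1"
  shows "(\<Sum>b\<le>k. cJ s k b / (s + 1 + real a + real b)) =
          pochhammer (- real a) k * fact k / pochhammer (s + 1 + real a) (Suc k)"
proof -
  have "(\<Sum>b\<le>k. cJ s k b / (s + 1 + real a + real b)) =
        (\<Sum>b\<le>k. real (k choose b) * (-1)^b * (poly (pJ s k) (real b) / ((s + 1 + real a) + real b)))"
    by (simp add: cJ_def poly_pJ algebra_simps)
  also have "\<dots> = poly (pJ s k) (-(s + 1 + real a)) * fact k / pochhammer (s + 1 + real a) (Suc k)"
    using assms by (intro alt_poly_sum) (auto simp: degree_pJ)
  finally show ?thesis by (simp add: poly_pJ)
qed

lemma poch_neg_zero: "a < k \<Longrightarrow> pochhammer (- real a) k = (0::real)"
  by (auto simp: pochhammer_eq_0_iff)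

lemma jac_inner_le:
  assumes "s > -1" "j \<le> k"
  shows "(\<Sum>a\<le>j. \<Sum>b\<le>k. cJ s j a * cJ s k b / (s + 1 + real a + real b)) =
          (if j = k then (fact k)^2 / (s + 2 * real k + 1) else 0)"
proof -
  have "(\<Sum>a\<le>j. \<Sum>b\<le>k. cJ s j a * cJ s k b / (s + 1 + real a + real b)) =
        (\<Sum>a\<le>j. cJ s j a * (pochhammer (- real a) k * fact k / pochhammer (s + 1 + real a) (Suc k)))"
    by (intro sum.cong refl) (simp add: inner_b[OF assms(1), symmetric] sum_distrib_left)
  also have "\<dots> = (\<Sum>a\<le>j. if a = k then cJ s k k * (pochhammer (- real k) k * fact k / pochhammer (s + 1 + real k) (Suc k)) else 0)"
    using assms(2) by (intro sum.cong refl) (auto simp: poch_neg_zero)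
  also have "\<dots> = (if j = k then cJ s k k * (pochhammer (- real k) k * fact k / pochhammer (s + 1 + real k) (Suc k)) else 0)"
    using assms(2) by (simp add: sum.delta)
  also have "cJ s k k * (pochhammer (- real k) k * fact k / pochhammer (s + 1 + real k) (Suc k)) = (fact k)^2 / (s + 2 * real k + 1)"
  proof -
    define Pk where "Pk = pochhammer (s + real k + 1) k"
    have P: "Pk > 0" unfolding Pk_def using assms(1) by (intro pochhammer_pos) simp
    have e1: "pochhammer (s + 1 + real k) (Suc k) = Pk * (s + 2 * real k + 1)"
      unfolding Pk_def by (simp add: pochhammer_Suc algebra_simps)
    have e2: "pochhammer (- real k) k = (-1)^k * fact k" by (simp add: pochhammer_same)
    have e3: "cJ s k k = (-1)^k * Pk" by (simp add: cJ_def Pk_def)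
    have m1: "((-1::real)^k) * (-1)^k = 1" by (simp flip: power_mult_distrib)
    have pos: "s + 2 * real k + 1 > 0" using assms(1) by simp
    have "cJ s k k * (pochhammer (- real k) k * fact k / pochhammer (s + 1 + real k) (Suc k))
       = ((-1)^k * (-1)^k) * (Pk * (fact k * fact k)) / (Pk * (s + 2 * real k + 1))"
      unfolding e1 e2 e3 by (simp add: algebra_simps)
    also have "\<dots> = (fact k)^2 / (s + 2 * real k + 1)"
      unfolding m1 using P pos by (simp add: power2_eq_square)
    finally show ?thesis .
  qed
  finally show ?thesis by simp
qed

lemma jac_inner:
  assumes "s > -1"
  shows "(\<Sum>a\<le>j. \<Sum>b\<le>k. cJ s j a * cJ s k b / (s + 1 + real a + real b)) =
          (if j = k then (fact k)^2 / (s + 2 * real k + 1) else 0)"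
proof (cases "j \<le> k")
  case True then show ?thesis using jac_inner_le[OF assms] by blast
next
  case False
  have "(\<Sum>a\<le>j. \<Sum>b\<le>k. cJ s j a * cJ s k b / (s + 1 + real a + real b)) =
        (\<Sum>b\<le>k. \<Sum>a\<le>j. cJ s k b * cJ s j a / (s + 1 + real b + real a))"
    by (subst sum.swap) (simp add: algebra_simps)
  also have "\<dots> = 0" using jac_inner_le[OF assms, of k j] False by simp
  finally show ?thesis using False by simp
qed



lemma base_nn:
  fixes c p :: real
  assumes c: "c > 0" and p: "p > 1"
  shows "(\<integral>\<^sup>+x. ennreal ((c*x+1) powr (-p)) * indicator {0..} x \<partial>lborel) = ennreal (1/(c*(p-1)))"
proof -
  define F where "F x = - ((c*x+1) powr (1-p)) / (c*(p-1))" for x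
  have "(\<integral>\<^sup>+x. ennreal ((c*x+1) powr (-p)) * indicator {0..} x \<partial>lborel) = 0 - F 0"
  proof (rule nn_integral_FTC_atLeast)
    show "(\<lambda>x. (c*x+1) powr (-p)) \<in> borel_measurable borel" by measurable
    show "DERIV F x :> (c*x+1) powr (-p)" if "0 \<le> x" for x
    proof -
      have pos: "c*x+1 > 0" using that c by (simp add: add_nonneg_pos)
      have "DERIV F x :> - ((1-p) * (c*x+1) powr (1-p-1) * c) / (c*(p-1))"
        unfolding F_def using pos c p
        by (auto intro!: derivative_eq_intros)
      also have "- ((1-p) * (c*x+1) powr (1-p-1) * c) / (c*(p-1)) = (c*x+1) powr (-p)"
        using c p by (simp add: field_simps)
      finally show ?thesis .
    qed
    show "0 \<le> (c*x+1) powr (-p)" for x by simp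
    show "(F \<longlongrightarrow> 0) at_top" unfolding F_def using c p by real_asymp
  qed
  also have "0 - F 0 = 1/(c*(p-1))" by (simp add: F_def)
  finally show ?thesis by simp
qed

lemma base_int:
  fixes c p :: real
  assumes c: "c > 0" and p: "p > 1"
  shows "set_integrable lborel {0<..} (\<lambda>x. (c*x+1) powr (-p))
     \<and> (LINT x:{0<..}|lborel. (c*x+1) powr (-p)) = 1/(c*(p-1))"
proof -
  have "(\<integral>\<^sup>+x. ennreal (indicator {0<..} x * (c*x+1) powr (-p)) \<partial>lborel)
      = (\<integral>\<^sup>+x. ennreal ((c*x+1) powr (-p)) * indicator {0..} x \<partial>lborel)"
  proof (rule nn_integral_cong_AE)
    show "AE x in lborel. ennreal (indicator {0<..} x * (c*x+1) powr (-p)) =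
            ennreal ((c*x+1) powr (-p)) * indicator {0..} x"
      using AE_lborel_singleton[of "0::real"]
      by eventually_elim (auto split: split_indicator)
  qed
  also have "\<dots> = ennreal (1/(c*(p-1)))" by (rule base_nn[OF c p])
  finally have "integrable lborel (\<lambda>x. indicator {0<..} x * (c*x+1) powr (-p)) \<and>
      integral\<^sup>L lborel (\<lambda>x. indicator {0<..} x * (c*x+1) powr (-p)) = 1/(c*(p-1))"
    using c p by (subst (asm) nn_integral_eq_integrable) auto
  then show ?thesis by (simp add: set_integrable_def set_lebesgue_integral_def)
qed



lemma setint_sum:
  fixes f :: "'i \<Rightarrow> real \<Rightarrow> real"
  assumes "finite I" "\<And>i. i \<in> I \<Longrightarrow> set_integrable lborel A (f i)"
  shows "set_integrable lborel A (\<lambda>x. \<Sum>i\<in>I. f i x) \<and>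
         (LINT x:A|lborel. (\<Sum>i\<in>I. f i x)) = (\<Sum>i\<in>I. LINT x:A|lborel. f i x)"
proof -
  have eq: "(\<lambda>x. indicator A x *\<^sub>R (\<Sum>i\<in>I. f i x)) = (\<lambda>x. \<Sum>i\<in>I. indicator A x *\<^sub>R f i x)"
    by (simp add: sum_distrib_left)
  have "integrable lborel (\<lambda>x. \<Sum>i\<in>I. indicator A x *\<^sub>R f i x)"
  proof (rule Bochner_Integration.integrable_sum)
    fix i assume "i \<in> I"
    then show "integrable lborel (\<lambda>x. indicator A x *\<^sub>R f i x)"
      using assms(2) by (simp add: set_integrable_def)
  qed
  moreover have "integral\<^sup>L lborel (\<lambda>x. \<Sum>i\<in>I. indicator A x *\<^sub>R f i x) = (\<Sum>i\<in>I. LINT x:A|lborel. f i x)"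
    using assms by (subst Bochner_Integration.integral_sum) (auto simp: set_integrable_def set_lebesgue_integral_def)
  ultimately show ?thesis unfolding set_integrable_def set_lebesgue_integral_def eq by simp
qed

definition tJ :: "nat \<Rightarrow> real \<Rightarrow> real" where
  "tJ n x = 1 / ((real n)^2 * x + 1)"

definition PK :: "real \<Rightarrow> nat \<Rightarrow> real \<Rightarrow> real" where
  "PK s k t = (\<Sum>a\<le>k. cJ s k a * t^a)"

definition nJ :: "real \<Rightarrow> nat \<Rightarrow> real" where
  "nJ s k = sqrt (s + 2 * real k + 1) / fact k"

definition Jf :: "nat \<Rightarrow> real \<Rightarrow> nat \<Rightarrow> real \<Rightarrow> real" where
  "Jf n s k x = real n * nJ s k * ((real n)^2 * x + 1) powr (-(s/2+1)) * PK s k (tJ n x)"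

lemma Jf_prod:
  assumes "x \<ge> 0"
  shows "Jf n s i x * Jf n s j x =
     (\<Sum>a\<le>i. \<Sum>b\<le>j. ((real n)^2 * nJ s i * nJ s j * cJ s i a * cJ s j b) *
         ((real n)^2 * x + 1) powr (-(s + 2 + real (a + b))))"
proof -
  define y where "y = (real n)^2 * x + 1"
  have y: "y > 0" unfolding y_def using assms by (simp add: add_nonneg_pos)
  have t: "tJ n x = 1 / y" by (simp add: tJ_def y_def)
  have pw: "y powr (-(s/2+1)) * y powr (-(s/2+1)) * (1/y)^a * (1/y)^b = y powr (-(s + 2 + real (a + b)))" for a b
  proof -
    have "y powr (- real (a+b)) = inverse (y powr real (a+b))" by (rule powr_minus)
    also have "\<dots> = inverse (y ^ (a+b))" using powr_realpow[OF y, of "a+b"] by simp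
    finally have "(1/y)^a * (1/y)^b = y powr (- real (a+b))"
      by (simp add: power_add divide_inverse power_inverse)
    then show ?thesis using y by (simp add: powr_add[symmetric] mult.assoc)
  qed
  have "Jf n s i x * Jf n s j x = (real n)^2 * nJ s i * nJ s j * (y powr (-(s/2+1)) * y powr (-(s/2+1)))
           * (PK s i (1/y) * PK s j (1/y))"
    unfolding Jf_def t y_def[symmetric] by (simp add: power2_eq_square algebra_simps)
  also have "PK s i (1/y) * PK s j (1/y) = (\<Sum>a\<le>i. \<Sum>b\<le>j. cJ s i a * cJ s j b * ((1/y)^a * (1/y)^b))"
    unfolding PK_def sum_product by (simp add: algebra_simps)
  also have "(real n)^2 * nJ s i * nJ s j * (y powr (-(s/2+1)) * y powr (-(s/2+1)))
           * (\<Sum>a\<le>i. \<Sum>b\<le>j. cJ s i a * cJ s j b * ((1/y)^a * (1/y)^b))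
     = (\<Sum>a\<le>i. \<Sum>b\<le>j. ((real n)^2 * nJ s i * nJ s j * cJ s i a * cJ s j b) *
         (y powr (-(s/2+1)) * y powr (-(s/2+1)) * (1/y)^a * (1/y)^b))"
    by (simp add: sum_distrib_left algebra_simps)
  also have "\<dots> = (\<Sum>a\<le>i. \<Sum>b\<le>j. ((real n)^2 * nJ s i * nJ s j * cJ s i a * cJ s j b) *
         y powr (-(s + 2 + real (a + b))))"
    by (simp only: pw)
  finally show ?thesis unfolding y_def .
qed

lemma Jf_orth:
  assumes s: "s > -1" and n: "n > 0"
  shows "set_integrable lborel {0<..} (\<lambda>x. Jf n s i x * Jf n s j x) \<and>
         (LINT x:{0<..}|lborel. Jf n s i x * Jf n s j x) = (if i = j then 1 else 0)"
proof -
  define K where "K a b = (real n)^2 * nJ s i * nJ s j * cJ s i a * cJ s j b" for a b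
  define G where "G a b x = K a b * ((real n)^2 * x + 1) powr (-(s + 2 + real (a + b)))" for a b x
  have c: "(real n)^2 > 0" using n by simp
  have G1: "set_integrable lborel {0<..} (G a b) \<and>
            (LINT x:{0<..}|lborel. G a b x) = K a b * (1 / ((real n)^2 * (s + 1 + real a + real b)))" for a b
  proof -
    have p: "s + 2 + real (a + b) > 1" using s by simp
    from base_int[OF c p] show ?thesis unfolding G_def
      by (simp add: algebra_simps)
  qed
  have G2: "set_integrable lborel {0<..} (\<lambda>x. \<Sum>b\<le>j. G a b x) \<and>
            (LINT x:{0<..}|lborel. (\<Sum>b\<le>j. G a b x)) =
              (\<Sum>b\<le>j. K a b * (1 / ((real n)^2 * (s + 1 + real a + real b))))" for a
    using setint_sum[of "{..j}" "{0<..}" "G a"] G1 by simp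
  have G3: "set_integrable lborel {0<..} (\<lambda>x. \<Sum>a\<le>i. \<Sum>b\<le>j. G a b x) \<and>
            (LINT x:{0<..}|lborel. (\<Sum>a\<le>i. \<Sum>b\<le>j. G a b x)) =
              (\<Sum>a\<le>i. \<Sum>b\<le>j. K a b * (1 / ((real n)^2 * (s + 1 + real a + real b))))"
    using setint_sum[of "{..i}" "{0<..}" "\<lambda>a x. \<Sum>b\<le>j. G a b x"] G2 by simp
  have eq: "Jf n s i x * Jf n s j x = (\<Sum>a\<le>i. \<Sum>b\<le>j. G a b x)" if "x \<in> {0<..}" for x
    using that Jf_prod[of x n s i j] by (simp add: G_def K_def)
  have "(\<Sum>a\<le>i. \<Sum>b\<le>j. K a b * (1 / ((real n)^2 * (s + 1 + real a + real b))))
      = nJ s i * nJ s j * (\<Sum>a\<le>i. \<Sum>b\<le>j. cJ s i a * cJ s j b / (s + 1 + real a + real b))"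
  proof -
    have t: "K a b * (1 / ((real n)^2 * q)) = nJ s i * nJ s j * (cJ s i a * cJ s j b / q)" for a b q
      using c by (simp add: K_def)
    show ?thesis unfolding t by (simp add: sum_distrib_left)
  qed
  also have "\<dots> = nJ s i * nJ s j * (if i = j then (fact j)^2 / (s + 2 * real j + 1) else 0)"
    using jac_inner[OF s] by simp
  also have "\<dots> = (if i = j then 1 else 0)"
  proof -
    have pos: "s + 2 * real j + 1 > 0" using s by simp
    have "nJ s j * nJ s j = (s + 2 * real j + 1) / (fact j)^2"
      unfolding nJ_def using pos by (simp add: power2_eq_square)
    then show ?thesis using pos by (simp add: field_simps)
  qed
  finally have val: "(\<Sum>a\<le>i. \<Sum>b\<le>j. K a b * (1 / ((real n)^2 * (s + 1 + real a + real b)))) = (if i = j then 1 else 0)" .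
  have "set_integrable lborel {0<..} (\<lambda>x. Jf n s i x * Jf n s j x)"
    using G3 set_integrable_cong[of lborel lborel "{0<..}" "{0<..}" "\<lambda>x. Jf n s i x * Jf n s j x"
        "\<lambda>x. \<Sum>a\<le>i. \<Sum>b\<le>j. G a b x"] eq by auto
  moreover have "(LINT x:{0<..}|lborel. Jf n s i x * Jf n s j x) = (LINT x:{0<..}|lborel. (\<Sum>a\<le>i. \<Sum>b\<le>j. G a b x))"
    using eq by (intro set_lebesgue_integral_cong) auto
  ultimately show ?thesis using G3 val by simp
qed



definition PKp :: "real \<Rightarrow> nat \<Rightarrow> real poly" where
  "PKp s k = (\<Sum>a\<le>k. monom (cJ s k a) a)"

lemma poly_PKp: "poly (PKp s k) t = PK s k t"
  by (simp add: PKp_def PK_def poly_sum poly_monom)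

lemma degree_PKp: "degree (PKp s k) \<le> k"
  unfolding PKp_def by (rule degree_sum_le) (auto intro: order.trans[OF degree_monom_le])

lemma coeff_PKp_top: "coeff (PKp s k) k = cJ s k k"
  by (simp add: PKp_def coeff_sum coeff_monom)

lemma cJ_top_nz: "s > -1 \<Longrightarrow> cJ s k k \<noteq> 0"
  using pochhammer_pos[of "s + real k + 1" k] by (simp add: cJ_def)

lemma nJ_pos: "s > -1 \<Longrightarrow> nJ s k > 0"
  by (simp add: nJ_def)

lemma poly_sum_lt:
  fixes p :: "real poly"
  assumes "degree p < N"
  shows "poly p x = (\<Sum>l<N. coeff p l * x^l)"
proof -
  have "poly p x = (\<Sum>l\<le>degree p. coeff p l * x^l)" by (rule poly_altdef)
  also have "\<dots> = (\<Sum>l<N. coeff p l * x^l)"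
    using assms by (intro sum.mono_neutral_left) (auto simp: coeff_eq_0)
  finally show ?thesis .
qed

lemma tJ_w:
  assumes "x > 0"
  shows "tJ n x = (1 - ((real n)^2 * x - 1) / ((real n)^2 * x + 1)) / 2"
proof -
  have "(real n)^2 * x + 1 > 0" using assms by (simp add: add_nonneg_pos)
  then show ?thesis by (simp add: tJ_def field_simps)
qed

lemma Jf_in_span:
  assumes "k < n"
  shows "\<exists>c. \<forall>x>0. Jf n s k x = (\<Sum>l<n. c l * basis_fun n s l x)"
proof -
  define Q where "Q = pcompose (PKp s k) [:1/2, -1/2:]"
  have dQ: "degree Q < n"
    unfolding Q_def using degree_pcompose_le[of "PKp s k" "[:1/2, -1/2:]"] degree_PKp[of s k] assms
    by simp
  show ?thesis
  proof (intro exI allI impI)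
    fix x :: real assume x: "x > 0"
    define w where "w = ((real n)^2 * x - 1) / ((real n)^2 * x + 1)"
    have pos: "(real n)^2 * x + 1 > 0" using x by (simp add: add_nonneg_pos)
    have "poly [:1/2, -1/2:] w = tJ n x"
      unfolding tJ_w[OF x] w_def using pos by (simp add: field_simps)
    then have "PK s k (tJ n x) = poly Q w"
      unfolding Q_def poly_pcompose poly_PKp by simp
    also have "\<dots> = (\<Sum>l<n. coeff Q l * w^l)" by (rule poly_sum_lt[OF dQ])
    finally have "PK s k (tJ n x) = (\<Sum>l<n. coeff Q l * w^l)" .
    then show "Jf n s k x = (\<Sum>l<n. (real n * nJ s k * coeff Q l) * basis_fun n s l x)"
      by (simp add: Jf_def basis_fun_def w_def sum_distrib_left algebra_simps)
  qed
qed

lemma span_PK: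
  assumes s: "s > -1" and "degree R < N"
  shows "\<exists>d. \<forall>t. poly R t = (\<Sum>k<N. d k * PK s k t)"
  using assms(2)
proof (induction N arbitrary: R)
  case 0 then show ?case by simp
next
  case (Suc N)
  show ?case
  proof (cases "degree R < N")
    case True
    from Suc.IH[OF True] obtain d where d: "\<forall>t. poly R t = (\<Sum>k<N. d k * PK s k t)" by blast
    show ?thesis by (rule exI[of _ "d(N := 0)"]) (simp add: d)
  next
    case False
    then have dR: "degree R = N" using Suc.prems by simp
    define r where "r = coeff R N / cJ s N N"
    define R' where "R' = R - smult r (PKp s N)"
    have "degree R' \<le> N" unfolding R'_def using dR degree_PKp[of s N]
      by (intro degree_diff_le) (auto intro: order.trans[OF degree_smult_le])
    moreover have "coeff R' N = 0"
      unfolding R'_def r_def using cJ_top_nz[OF s, of N] by (simp add: coeff_PKp_top)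
    ultimately have "R' = 0 \<or> degree R' < N"
      by (metis le_neq_implies_less leading_coeff_0_iff)
    then have "degree R' < N \<or> R' = 0" by blast
    then obtain d where d: "\<forall>t. poly R' t = (\<Sum>k<N. d k * PK s k t)"
    proof
      assume "degree R' < N" then show ?thesis using Suc.IH that by blast
    next
      assume "R' = 0" then show ?thesis using that[of "\<lambda>_. 0"] by simp
    qed
    show ?thesis
    proof (rule exI[of _ "d(N := r)"], intro allI)
      fix t
      have "poly R t = poly R' t + r * PK s N t"
        unfolding R'_def by (simp add: poly_PKp)
      then show "poly R t = (\<Sum>k<Suc N. (d(N := r)) k * PK s k t)"
        by (simp add: d)
    qed
  qed
qed

lemma span_to_Jf:
  assumes s: "s > -1" and n: "n > 0"
    and f: "\<forall>x>0. f x = (\<Sum>l<n. c l * basis_fun n s l x)"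
  shows "\<exists>d. \<forall>x>0. f x = (\<Sum>k<n. d k * Jf n s k x)"
proof -
  define R where "R = (\<Sum>l<n. smult (c l) ([:1, -2:] ^ l))"
  have dR: "degree R < n"
  proof -
    have "degree R \<le> n - 1" unfolding R_def
    proof (rule degree_sum_le)
      fix l assume l: "l \<in> {..<n}"
      have "degree (smult (c l) ([:1, -2:] ^ l :: real poly)) \<le> degree ([:1, -2:] ^ l :: real poly)"
        by (rule degree_smult_le)
      also have "\<dots> \<le> l" using degree_power_le[of "[:1, -2:] :: real poly" l] by simp
      finally show "degree (smult (c l) ([:1, -2:] ^ l :: real poly)) \<le> n - 1" using l by simp
    qed simp
    then show ?thesis using n by simp
  qed
  obtain d where d: "\<forall>t. poly R t = (\<Sum>k<n. d k * PK s k t)" using span_PK[OF s dR] by blast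
  show ?thesis
  proof (rule exI[of _ "\<lambda>k. d k / (real n * nJ s k)"], intro allI impI)
    fix x :: real assume x: "x > 0"
    define w where "w = ((real n)^2 * x - 1) / ((real n)^2 * x + 1)"
    have pos: "(real n)^2 * x + 1 > 0" using x by (simp add: add_nonneg_pos)
    have tw: "1 - 2 * tJ n x = w" unfolding tJ_w[OF x] w_def using pos by (simp add: field_simps)
    have "f x = ((real n)^2 * x + 1) powr (-(s/2+1)) * (\<Sum>l<n. c l * w^l)"
      using f x by (simp add: basis_fun_def w_def sum_distrib_left algebra_simps)
    also have "(\<Sum>l<n. c l * w^l) = poly R (tJ n x)"
      unfolding R_def by (simp add: poly_sum tw[symmetric] mult.commute)
    also have "\<dots> = (\<Sum>k<n. d k * PK s k (tJ n x))" using d by simp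
    finally have fx: "f x = ((real n)^2 * x + 1) powr (-(s/2+1)) * (\<Sum>k<n. d k * PK s k (tJ n x))" .
    have t: "d k / (real n * nJ s k) * Jf n s k x = ((real n)^2 * x + 1) powr (-(s/2+1)) * (d k * PK s k (tJ n x))" for k
      using n nJ_pos[OF s, of k] by (simp add: Jf_def)
    show "f x = (\<Sum>k<n. d k / (real n * nJ s k) * Jf n s k x)"
      unfolding t fx by (simp add: sum_distrib_left)
  qed
qed



lemma onb_Jf:
  assumes s: "s > -1" and n: "n > 0"
  shows "is_onb n s (Jf n s)"
  unfolding is_onb_def using Jf_in_span Jf_orth[OF s n] by blast

lemma Kdiag_le:
  assumes s: "s > -1" and n: "n > 0" and x: "x > 0"
  shows "Kdiag n s x \<le> (\<Sum>k<n. (Jf n s k x)^2)"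
proof -
  define e where "e = (SOME e. is_onb n s e)"
  have onb: "is_onb n s e" unfolding e_def using onb_Jf[OF s n] by (rule someI[where P="is_onb n s"])
  have K: "Kdiag n s x = (\<Sum>l<n. (e l x)^2)" by (simp add: Kdiag_def e_def)
  have "\<forall>l. \<exists>a. l < n \<longrightarrow> (\<forall>y>0. e l y = (\<Sum>k<n. a k * Jf n s k y))"
  proof (intro allI)
    fix l
    show "\<exists>a. l < n \<longrightarrow> (\<forall>y>0. e l y = (\<Sum>k<n. a k * Jf n s k y))"
    proof (cases "l < n")
      case True
      then obtain c where "\<forall>x>0. e l x = (\<Sum>j<n. c j * basis_fun n s j x)"
        using onb unfolding is_onb_def by blast
      from span_to_Jf[OF s n this] show ?thesis by blast
    qed simp
  qed
  then obtain A where A: "\<And>l y. l < n \<Longrightarrow> y > 0 \<Longrightarrow> e l y = (\<Sum>k<n. A l k * Jf n s k y)"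
    by metis
  have orthA: "(\<Sum>k<n. A l k * A m k) = (if l = m then 1 else 0)" if l: "l < n" and m: "m < n" for l m
  proof -
    have int_e: "(LINT y:{0<..}|lborel. e l y * e m y) = (if l = m then 1 else 0)"
      using onb l m unfolding is_onb_def by blast
    have eq: "e l y * e m y = (\<Sum>k<n. \<Sum>k'<n. A l k * A m k' * (Jf n s k y * Jf n s k' y))"
      if "y \<in> {0<..}" for y
      using that A[OF l] A[OF m] by (simp add: sum_product algebra_simps)
    have I1: "set_integrable lborel {0<..} (\<lambda>y. A l k * A m k' * (Jf n s k y * Jf n s k' y)) \<and>
              (LINT y:{0<..}|lborel. A l k * A m k' * (Jf n s k y * Jf n s k' y)) =
                A l k * A m k' * (if k = k' then 1 else 0)" for k k'
      using Jf_orth[OF s n, of k k'] by auto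
    have I2: "set_integrable lborel {0<..} (\<lambda>y. \<Sum>k'<n. A l k * A m k' * (Jf n s k y * Jf n s k' y)) \<and>
              (LINT y:{0<..}|lborel. (\<Sum>k'<n. A l k * A m k' * (Jf n s k y * Jf n s k' y))) =
                (\<Sum>k'<n. A l k * A m k' * (if k = k' then 1 else 0))" for k
    proof -
      have "set_integrable lborel {0<..} (\<lambda>y. \<Sum>k'<n. A l k * A m k' * (Jf n s k y * Jf n s k' y)) \<and>
              (LINT y:{0<..}|lborel. (\<Sum>k'<n. A l k * A m k' * (Jf n s k y * Jf n s k' y))) =
                (\<Sum>k'<n. (LINT y:{0<..}|lborel. A l k * A m k' * (Jf n s k y * Jf n s k' y)))"
        by (rule setint_sum[of "{..<n}" "{0<..}" "\<lambda>k' y. A l k * A m k' * (Jf n s k y * Jf n s k' y)", OF finite_lessThan I1[THEN conjunct1]])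
      moreover have "(\<Sum>k'<n. (LINT y:{0<..}|lborel. A l k * A m k' * (Jf n s k y * Jf n s k' y)))
          = (\<Sum>k'<n. A l k * A m k' * (if k = k' then 1 else 0))"
        by (rule sum.cong[OF refl]) (rule I1[THEN conjunct2])
      ultimately show ?thesis by simp
    qed
    have I3: "(LINT y:{0<..}|lborel. (\<Sum>k<n. \<Sum>k'<n. A l k * A m k' * (Jf n s k y * Jf n s k' y))) =
                (\<Sum>k<n. \<Sum>k'<n. A l k * A m k' * (if k = k' then 1 else 0))"
    proof -
      have "(LINT y:{0<..}|lborel. (\<Sum>k<n. \<Sum>k'<n. A l k * A m k' * (Jf n s k y * Jf n s k' y))) =
                (\<Sum>k<n. (LINT y:{0<..}|lborel. (\<Sum>k'<n. A l k * A m k' * (Jf n s k y * Jf n s k' y))))"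
        by (rule setint_sum[of "{..<n}" "{0<..}" "\<lambda>k y. \<Sum>k'<n. A l k * A m k' * (Jf n s k y * Jf n s k' y)", OF finite_lessThan I2[THEN conjunct1], THEN conjunct2])
      also have "\<dots> = (\<Sum>k<n. \<Sum>k'<n. A l k * A m k' * (if k = k' then 1 else 0))"
        by (rule sum.cong[OF refl]) (rule I2[THEN conjunct2])
      finally show ?thesis .
    qed
    have "(LINT y:{0<..}|lborel. e l y * e m y) =
          (LINT y:{0<..}|lborel. (\<Sum>k<n. \<Sum>k'<n. A l k * A m k' * (Jf n s k y * Jf n s k' y)))"
      using eq by (intro set_lebesgue_integral_cong) auto
    also have "\<dots> = (\<Sum>k<n. A l k * A m k)"
      unfolding I3 by (simp add: if_distrib cong: if_cong)
    finally show ?thesis using int_e by simp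
  qed
  define E where "E l = e l x" for l
  define J where "J k = Jf n s k x" for k
  define D where "D k = (\<Sum>l<n. E l * A l k)" for k
  define S where "S = (\<Sum>l<n. (E l)^2)"
  have EJ: "E l = (\<Sum>k<n. A l k * J k)" if "l < n" for l
    using A[OF that x] by (simp add: E_def J_def)
  have S1: "(\<Sum>k<n. D k * J k) = S"
  proof -
    have "(\<Sum>k<n. D k * J k) = (\<Sum>l<n. E l * (\<Sum>k<n. A l k * J k))"
      unfolding D_def sum_distrib_right sum_distrib_left
      by (subst sum.swap) (simp add: algebra_simps)
    also have "\<dots> = S" unfolding S_def using EJ by (simp add: power2_eq_square)
    finally show ?thesis .
  qed
  have S2: "(\<Sum>k<n. (D k)^2) = S"
  proof -
    have "(\<Sum>k<n. (D k)^2) = (\<Sum>k<n. \<Sum>l<n. \<Sum>m<n. E l * E m * (A l k * A m k))"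
      unfolding D_def power2_eq_square sum_product by (simp add: algebra_simps)
    also have "\<dots> = (\<Sum>l<n. \<Sum>k<n. \<Sum>m<n. E l * E m * (A l k * A m k))"
      by (rule sum.swap)
    also have "\<dots> = (\<Sum>l<n. \<Sum>m<n. \<Sum>k<n. E l * E m * (A l k * A m k))"
      by (rule sum.cong[OF refl], rule sum.swap)
    also have "\<dots> = (\<Sum>l<n. \<Sum>m<n. E l * E m * (\<Sum>k<n. A l k * A m k))"
      by (simp add: sum_distrib_left)
    also have "\<dots> = (\<Sum>l<n. \<Sum>m<n. E l * E m * (if l = m then 1 else 0))"
      using orthA by simp
    also have "\<dots> = S" unfolding S_def by (simp add: power2_eq_square if_distrib cong: if_cong)
    finally show ?thesis .
  qed
  have S0: "S \<ge> 0" unfolding S_def by (simp add: sum_nonneg)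
  have "S^2 \<le> S * (\<Sum>k<n. (J k)^2)"
    using Cauchy_Schwarz_ineq_sum[of D J "{..<n}"] unfolding S1 S2 .
  then have "S \<le> (\<Sum>k<n. (J k)^2)" using S0
    by (cases "S = 0") (auto simp: power2_eq_square sum_nonneg)
  then show ?thesis unfolding K S_def E_def J_def .
qed



lemma poch_ge1: "z \<ge> 1 \<Longrightarrow> pochhammer (z::real) a \<ge> 1"
  unfolding pochhammer_prod by (rule prod_ge_1) auto

lemma poch_ge_min:
  fixes s :: real
  assumes "s > -1"
  shows "pochhammer (s + 1) a \<ge> min 1 (s + 1)"
proof (cases a)
  case 0 then show ?thesis by (auto simp: min_def)
next
  case (Suc b)
  have "pochhammer (s + 1) a = (s + 1) * pochhammer (s + 2) b"
    using Suc by (simp add: pochhammer_rec algebra_simps)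
  moreover have "pochhammer (s + 2) b \<ge> 1" using assms by (intro poch_ge1) simp
  ultimately have "pochhammer (s + 1) a \<ge> (s + 1) * 1" using assms
    by (simp only:) (intro mult_left_mono, auto)
  then show ?thesis by simp
qed

lemma poch_le_pow:
  assumes "z \<ge> 0" "\<And>i. i < a \<Longrightarrow> z + real i \<le> Q"
  shows "pochhammer (z::real) a \<le> Q ^ a"
proof -
  have "pochhammer z a = (\<Prod>i<a. z + real i)" by (simp add: pochhammer_prod atLeast0LessThan)
  also have "\<dots> \<le> (\<Prod>i<a. Q)" using assms by (intro prod_mono) auto
  finally show ?thesis by simp
qed

lemma binom_real_le: "real (k choose a) \<le> real k ^ a / fact a"
proof -
  have "real ((k choose a) * fact a) \<le> real (k ^ a)" by (rule of_nat_mono[OF binomial_fact_pow])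
  then show ?thesis by (simp add: field_simps)
qed

lemma exp_partial: "M \<ge> 0 \<Longrightarrow> (\<Sum>a\<le>k. M ^ a / fact a) \<le> exp (M::real)"
  using summable_exp_generic[of M]
  by (auto simp: exp_def divide_inverse ac_simps intro!: sum_le_suminf)

definition EJ :: "real \<Rightarrow> real" where
  "EJ s = exp (max s 0 + 2) / min 1 (s + 1)"

lemma PK_bound:
  assumes s: "s > -1" and t: "t \<ge> 0" "(real k)^2 * t \<le> 1"
  shows "\<bar>PK s k t\<bar> \<le> EJ s * pochhammer (s + 1) k"
proof -
  define M where "M = max s 0 + 2"
  define m where "m = min 1 (s + 1)"
  have m: "m > 0" unfolding m_def using s by simp
  have M: "M \<ge> 0" unfolding M_def by simp
  have Pk: "pochhammer (s + 1) k > 0" using s by (intro pochhammer_pos) simp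
  have trm: "\<bar>cJ s k a * t^a\<bar> \<le> pochhammer (s + 1) k * (M ^ a / fact a) / m" if a: "a \<le> k" for a
  proof -
    have P1: "pochhammer (s + 1) a > 0" using s by (intro pochhammer_pos) simp
    have split: "pochhammer (s + real a + 1) k * pochhammer (s + 1) a = pochhammer (s + 1) k * pochhammer (s + 1 + real k) a"
      using pochhammer_product'[of "s+1" a k] pochhammer_product'[of "s+1" k a]
      by (simp add: algebra_simps)
    have Pa: "pochhammer (s + real a + 1) k \<ge> 0" using s by (intro pochhammer_nonneg) simp
    have pk: "pochhammer (s + 1 + real k) a \<le> (M * real k) ^ a"
    proof (rule poch_le_pow)
      show "0 \<le> s + 1 + real k" using s by simp
      fix i assume "i < a"
      then have "real i \<le> real k - 1" using a by linarith
      moreover have "k \<ge> 1" using \<open>i < a\<close> a by simp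
      ultimately show "s + 1 + real k + real i \<le> M * real k"
      proof (cases "s \<ge> 0")
        case True
        have "s * 1 \<le> s * real k" using True \<open>k \<ge> 1\<close> by (intro mult_left_mono) auto
        then show ?thesis unfolding M_def using True \<open>real i \<le> real k - 1\<close> by (simp add: algebra_simps)
      next
        case False
        then show ?thesis unfolding M_def using \<open>real i \<le> real k - 1\<close> by (simp add: algebra_simps)
      qed
    qed
    have "\<bar>cJ s k a * t^a\<bar> = real (k choose a) * pochhammer (s + real a + 1) k * t^a"
      using Pa t by (simp add: cJ_def abs_mult)
    also have "\<dots> = real (k choose a) * (pochhammer (s + 1) k * pochhammer (s + 1 + real k) a / pochhammer (s + 1) a) * t^a"
      using P1 split by (simp add: field_simps)
    also have "\<dots> \<le> (real k ^ a / fact a) * (pochhammer (s + 1) k * (M * real k) ^ a / m) * t^a"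
    proof -
      have B: "pochhammer (s + 1) k * pochhammer (s + 1 + real k) a / pochhammer (s + 1) a
             \<le> pochhammer (s + 1) k * (M * real k) ^ a / m"
      proof (rule frac_le)
        show "0 \<le> pochhammer (s + 1) k * (M * real k) ^ a" using Pk M by simp
        show "pochhammer (s + 1) k * pochhammer (s + 1 + real k) a \<le> pochhammer (s + 1) k * (M * real k) ^ a"
          using Pk pk by (intro mult_left_mono) auto
        show "0 < m" by (rule m)
        show "m \<le> pochhammer (s + 1) a" unfolding m_def by (rule poch_ge_min[OF s])
      qed
      have B0: "0 \<le> pochhammer (s + 1) k * pochhammer (s + 1 + real k) a / pochhammer (s + 1) a"
        using Pk P1 s by (intro divide_nonneg_pos mult_nonneg_nonneg pochhammer_nonneg) auto
      have "real (k choose a) * (pochhammer (s + 1) k * pochhammer (s + 1 + real k) a / pochhammer (s + 1) a)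
          \<le> (real k ^ a / fact a) * (pochhammer (s + 1) k * (M * real k) ^ a / m)"
        by (rule mult_mono[OF binom_real_le B]) (use B0 in auto)
      then show ?thesis using t by (intro mult_right_mono) auto
    qed
    also have "\<dots> = pochhammer (s + 1) k * (M ^ a / fact a) / m * ((real k)^2 * t) ^ a"
      by (simp add: power_mult_distrib field_simps power2_eq_square)
    also have "\<dots> \<le> pochhammer (s + 1) k * (M ^ a / fact a) / m * 1"
      using t Pk m M by (intro mult_left_mono power_le_one) auto
    finally show ?thesis by simp
  qed
  have "\<bar>PK s k t\<bar> \<le> (\<Sum>a\<le>k. \<bar>cJ s k a * t^a\<bar>)" unfolding PK_def by (rule sum_abs)
  also have "\<dots> \<le> (\<Sum>a\<le>k. pochhammer (s + 1) k * (M ^ a / fact a) / m)" by (intro sum_mono trm) simp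
  also have "\<dots> = pochhammer (s + 1) k / m * (\<Sum>a\<le>k. M ^ a / fact a)"
    by (simp add: sum_distrib_left sum_divide_distrib mult.commute)
  also have "\<dots> \<le> pochhammer (s + 1) k / m * exp M"
    using Pk m by (intro mult_left_mono exp_partial M) auto
  also have "\<dots> = EJ s * pochhammer (s + 1) k" by (simp add: EJ_def M_def m_def)
  finally show ?thesis .
qed



lemma t2_helper:
  fixes a f s P :: real
  assumes "a > 0" "f > 0" "s > -1"
  shows "(s + 2 * a + 1) * (P / (a * f))^2 = (s + 1) * (s + 2 * a + 1) * P^2 / ((s + 1) * f^2 * a^2)"
proof -
  have ne: "s + 1 \<noteq> 0" using assms by simp
  have "(s + 1) * (s + 2 * a + 1) * P^2 / ((s + 1) * f^2 * a^2) = (s + 2 * a + 1) * P^2 / (f^2 * a^2)"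
    using ne by (simp add: mult.assoc)
  also have "\<dots> = (s + 2 * a + 1) * (P / (a * f))^2"
    by (simp add: power_divide power_mult_distrib mult_ac)
  finally show ?thesis by simp
qed

lemma t3_helper:
  fixes a f s P q :: real
  shows "(P * q)^2 / ((s + 1) * (a * f)^2) = P^2 * q^2 / ((s + 1) * f^2 * a^2)"
  by (simp add: power_mult_distrib mult_ac)

lemma norm_sum:
  fixes s :: real
  assumes s: "s > -1"
  shows "(\<Sum>k<Suc m. (s + 2 * real k + 1) * (pochhammer (s + 1) k / fact k)^2)
           = (pochhammer (s + 1) (Suc m))^2 / ((s + 1) * (fact m)^2)"
proof (induction m)
  case 0
  then show ?case using s by (simp add: power2_eq_square)
next
  case (Suc m)
  define P where "P = pochhammer (s + 1) (Suc m)"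
  have P2: "pochhammer (s + 1) (Suc (Suc m)) = P * (s + real m + 2)"
    unfolding P_def by (simp add: pochhammer_Suc algebra_simps)
  have fs: "fact (Suc m) = (real m + 1) * fact m" by (simp add: algebra_simps)
  have F: "(fact m :: real) > 0" by simp
  have "(\<Sum>k<Suc (Suc m). (s + 2 * real k + 1) * (pochhammer (s + 1) k / fact k)^2)
      = P^2 / ((s + 1) * (fact m)^2) + (s + 2 * real (Suc m) + 1) * (P / fact (Suc m))^2"
    using Suc.IH by (simp add: P_def)
  also have "\<dots> = (P * (s + real m + 2))^2 / ((s + 1) * (fact (Suc m))^2)"
  proof -
    define D where "D = (s + 1) * (fact m)^2 * (real m + 1)^2"
    have key: "(real m + 1)^2 + (s + 1) * (s + 2 * real m + 3) = (s + real m + 2)^2"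
      by (simp add: power2_eq_square algebra_simps)
    have t1: "P^2 / ((s + 1) * (fact m)^2) = P^2 * (real m + 1)^2 / D"
      unfolding D_def using s F by simp
    have t2: "(s + 2 * real (Suc m) + 1) * (P / ((real m + 1) * fact m))^2 = (s + 1) * (s + 2 * real m + 3) * P^2 / D"
      unfolding D_def using t2_helper[of "real m + 1" "fact m" s P] s F by (simp add: algebra_simps)
    have t3: "(P * (s + real m + 2))^2 / ((s + 1) * ((real m + 1) * fact m)^2) = P^2 * (s + real m + 2)^2 / D"
      unfolding D_def by (rule t3_helper)
    show ?thesis unfolding fs t1 t2 t3 key[symmetric]
      by (simp add: add_divide_distrib[symmetric] algebra_simps)
  qed
  finally show ?case unfolding P2 .
qed

lemma gamma_bound:
  fixes s :: real
  assumes s: "s > -1"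
  shows "\<exists>B>0. \<forall>m\<ge>1. pochhammer (s + 1) (Suc m) \<le> B * fact m * real m powr (s + 1)"
proof -
  have "convergent (rGamma_series (s + 1))"
    using rGamma_series_LIMSEQ by (auto simp: convergent_def)
  then have "Bseq (rGamma_series (s + 1))" by (rule convergent_imp_Bseq)
  then obtain B where B: "B > 0" "\<And>m. norm (rGamma_series (s + 1) m) \<le> B"
    by (auto elim!: BseqE)
  show ?thesis
  proof (intro exI[of _ B] conjI allI impI)
    fix m :: nat assume m: "m \<ge> 1"
    have e: "exp ((s + 1) * ln (real m)) = real m powr (s + 1)"
      using m by (simp add: powr_def mult.commute)
    have pos: "fact m * real m powr (s + 1) > 0" using m by simp
    have r: "rGamma_series (s + 1) m = pochhammer (s + 1) (Suc m) / (fact m * real m powr (s + 1))"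
      unfolding rGamma_series_def e[symmetric] by simp
    have "pochhammer (s + 1) (Suc m) / (fact m * real m powr (s + 1)) \<le> B"
    proof -
      have "pochhammer (s + 1) (Suc m) / (fact m * real m powr (s + 1)) \<le> \<bar>pochhammer (s + 1) (Suc m)\<bar> / (fact m * real m powr (s + 1))"
        using pos by (intro divide_right_mono) auto
      then show ?thesis using B(2)[of m] unfolding r by simp
    qed
    then show "pochhammer (s + 1) (Suc m) \<le> B * fact m * real m powr (s + 1)"
      using pos by (simp add: divide_le_eq algebra_simps)
  qed (rule B(1))
qed

lemma S_bound:
  fixes s :: real
  assumes s: "s > -1"
  shows "\<exists>C1>0. \<forall>n\<ge>1. (\<Sum>k<n. (s + 2 * real k + 1) * (pochhammer (s + 1) k / fact k)^2)
           \<le> C1 * real n powr (2 * s + 2)"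
proof -
  obtain B where B: "B > 0" "\<And>m. m \<ge> 1 \<Longrightarrow> pochhammer (s + 1) (Suc m) \<le> B * fact m * real m powr (s + 1)"
    using gamma_bound[OF s] by blast
  define C1 where "C1 = (s + 1) + B^2 / (s + 1)"
  have C1: "C1 > 0" unfolding C1_def using s B by (simp add: add_pos_nonneg)
  show ?thesis
  proof (intro exI[of _ C1] conjI allI impI C1)
    fix n :: nat assume n: "n \<ge> 1"
    then obtain m where nm: "n = Suc m" by (cases n) auto
    have S: "(\<Sum>k<n. (s + 2 * real k + 1) * (pochhammer (s + 1) k / fact k)^2)
           = (pochhammer (s + 1) (Suc m))^2 / ((s + 1) * (fact m)^2)"
      unfolding nm by (rule norm_sum[OF s])
    have npow: "real n powr (2 * s + 2) \<ge> 1" using n s by (intro ge_one_powr_ge_zero) auto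
    show "(\<Sum>k<n. (s + 2 * real k + 1) * (pochhammer (s + 1) k / fact k)^2) \<le> C1 * real n powr (2 * s + 2)"
    proof (cases "m = 0")
      case True
      have "(\<Sum>k<n. (s + 2 * real k + 1) * (pochhammer (s + 1) k / fact k)^2) = s + 1"
        unfolding S True using s by (simp add: power2_eq_square)
      also have "\<dots> \<le> C1" unfolding C1_def using s by simp
      also have "\<dots> \<le> C1 * real n powr (2 * s + 2)" using C1 npow by simp
      finally show ?thesis .
    next
      case False
      then have m1: "m \<ge> 1" by simp
      have Pp: "pochhammer (s + 1) (Suc m) \<ge> 0" using s by (intro pochhammer_nonneg) simp
      have "(pochhammer (s + 1) (Suc m))^2 \<le> (B * fact m * real m powr (s + 1))^2"
        using B(2)[OF m1] Pp by (intro power_mono) auto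
      also have "\<dots> = B^2 * (fact m)^2 * real m powr (2 * s + 2)"
        using m1 by (simp add: power_mult_distrib powr_power)
      finally have "(pochhammer (s + 1) (Suc m))^2 / ((s + 1) * (fact m)^2)
            \<le> B^2 * (fact m)^2 * real m powr (2 * s + 2) / ((s + 1) * (fact m)^2)"
        using s by (intro divide_right_mono) auto
      also have "\<dots> = B^2 / (s + 1) * real m powr (2 * s + 2)" by simp
      also have "\<dots> \<le> B^2 / (s + 1) * real n powr (2 * s + 2)"
        using s nm by (intro mult_left_mono powr_mono2) auto
      also have "\<dots> \<le> C1 * real n powr (2 * s + 2)"
        unfolding C1_def using s npow by (intro mult_right_mono) auto
      finally show ?thesis unfolding S .
    qed
  qed
qed



lemma EJ_pos: "s > -1 \<Longrightarrow> EJ s > 0"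
  by (simp add: EJ_def)

lemma Jf_sq:
  assumes s: "s > -1" and x: "x \<ge> 0"
  shows "(Jf n s k x)^2 = (real n)^2 * ((real n)^2 * x + 1) powr (-(s+2)) *
           ((s + 2 * real k + 1) / (fact k)^2 * (PK s k (tJ n x))^2)"
proof -
  define y where "y = (real n)^2 * x + 1"
  have y: "y > 0" unfolding y_def using x by (simp add: add_nonneg_pos)
  have e: "-(s+2) = real 2 * (-(s/2+1))" by simp
  have p: "(y powr (-(s/2+1)))^2 = y powr (-(s+2))"
    unfolding e using y by (subst powr_power) auto
  have nj: "(nJ s k)^2 = (s + 2 * real k + 1) / (fact k)^2"
    using s by (simp add: nJ_def power_divide)
  show ?thesis unfolding Jf_def y_def[symmetric] power_mult_distrib p nj
    by (simp add: algebra_simps)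
qed

lemma Jsum_bound:
  assumes s: "s > -1" and n: "n \<ge> 1" and x: "x \<ge> 1"
  shows "(\<Sum>k<n. (Jf n s k x)^2) \<le> (real n)^2 * ((real n)^2 * x + 1) powr (-(s+2)) * (EJ s)^2 *
            (\<Sum>k<n. (s + 2 * real k + 1) * (pochhammer (s + 1) k / fact k)^2)"
proof -
  have x0: "x \<ge> 0" using x by simp
  have Q: "(real n)^2 * ((real n)^2 * x + 1) powr (-(s+2)) \<ge> 0" by simp
  have tb: "(s + 2 * real k + 1) / (fact k)^2 * (PK s k (tJ n x))^2 \<le>
            (EJ s)^2 * ((s + 2 * real k + 1) * (pochhammer (s + 1) k / fact k)^2)" if k: "k < n" for k
  proof -
    have t0: "tJ n x \<ge> 0" unfolding tJ_def using x0 by simp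
    have "(real k)^2 \<le> (real n)^2" using k by (intro power_mono) auto
    also have "\<dots> \<le> (real n)^2 * x" using x mult_left_mono[of 1 x "(real n)^2"] by simp
    finally have "(real k)^2 \<le> (real n)^2 * x + 1" by simp
    then have t1: "(real k)^2 * tJ n x \<le> 1" unfolding tJ_def using x0
      by (simp add: divide_le_eq add_nonneg_pos)
    have Pk: "pochhammer (s + 1) k > 0" using s by (intro pochhammer_pos) simp
    have "(PK s k (tJ n x))^2 = \<bar>PK s k (tJ n x)\<bar>^2" by simp
    also have "\<dots> \<le> (EJ s * pochhammer (s + 1) k)^2"
      using PK_bound[OF s t0 t1] by (intro power_mono) auto
    finally have "(PK s k (tJ n x))^2 \<le> (EJ s * pochhammer (s + 1) k)^2" .
    moreover have "(s + 2 * real k + 1) / (fact k)^2 \<ge> 0" using s by simp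
    ultimately have "(s + 2 * real k + 1) / (fact k)^2 * (PK s k (tJ n x))^2 \<le>
          (s + 2 * real k + 1) / (fact k)^2 * (EJ s * pochhammer (s + 1) k)^2"
      by (intro mult_left_mono)
    also have "\<dots> = (EJ s)^2 * ((s + 2 * real k + 1) * (pochhammer (s + 1) k / fact k)^2)"
      by (simp add: power_mult_distrib power_divide)
    finally show ?thesis .
  qed
  have "(\<Sum>k<n. (Jf n s k x)^2) = (real n)^2 * ((real n)^2 * x + 1) powr (-(s+2)) *
         (\<Sum>k<n. (s + 2 * real k + 1) / (fact k)^2 * (PK s k (tJ n x))^2)"
    unfolding Jf_sq[OF s x0] by (simp add: sum_distrib_left)
  also have "\<dots> \<le> (real n)^2 * ((real n)^2 * x + 1) powr (-(s+2)) *
         (\<Sum>k<n. (EJ s)^2 * ((s + 2 * real k + 1) * (pochhammer (s + 1) k / fact k)^2))"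
    using Q tb by (intro mult_left_mono sum_mono) auto
  finally show ?thesis by (simp add: sum_distrib_left mult.assoc)
qed

lemma scale_bound:
  assumes s: "s > -1" and n: "n \<ge> 1" and x: "x \<ge> 1"
  shows "(real n)^2 * ((real n)^2 * x + 1) powr (-(s+2)) * real n powr (2 * s + 2) \<le> x powr (-(s+2))"
proof -
  have np: "real n > 0" using n by simp
  have xp: "x > 0" using x by simp
  have "((real n)^2 * x + 1) powr (-(s+2)) \<le> ((real n)^2 * x) powr (-(s+2))"
    using s np xp by (intro powr_mono2') auto
  also have "((real n)^2 * x) powr (-(s+2)) = real n powr (- (2 * s + 4)) * x powr (-(s+2))"
  proof -
    have a: "((real n)^2) powr (-(s+2)) = real n powr (- (2 * s + 4))"
    proof -
      have "((real n)^2) powr (-(s+2)) = (real n powr 2) powr (-(s+2))"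
        by (subst powr_numeral[OF less_imp_le[OF np]]) (rule refl)
      also have "\<dots> = real n powr (2 * (-(s+2)))" by (rule powr_powr)
      also have "2 * (-(s+2)) = - (2 * s + 4)" by simp
      finally show ?thesis .
    qed
    have "((real n)^2 * x) powr (-(s+2)) = ((real n)^2) powr (-(s+2)) * x powr (-(s+2))"
      using np xp by (simp add: powr_mult)
    then show ?thesis unfolding a .
  qed
  finally have A: "((real n)^2 * x + 1) powr (-(s+2)) \<le> real n powr (- (2 * s + 4)) * x powr (-(s+2))" .
  have "(real n)^2 * ((real n)^2 * x + 1) powr (-(s+2)) * real n powr (2 * s + 2)
      \<le> (real n)^2 * (real n powr (- (2 * s + 4)) * x powr (-(s+2))) * real n powr (2 * s + 2)"
    using A by (intro mult_right_mono mult_left_mono) auto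
  also have "\<dots> = (real n powr 2 * real n powr (- (2 * s + 4)) * real n powr (2 * s + 2)) * x powr (-(s+2))"
    using np by (simp add: powr_realpow algebra_simps)
  also have "real n powr 2 * real n powr (- (2 * s + 4)) * real n powr (2 * s + 2) = 1"
  proof -
    have "real n powr 2 * real n powr (- (2 * s + 4)) * real n powr (2 * s + 2)
        = real n powr (2 + (- (2 * s + 4)) + (2 * s + 2))" by (simp only: powr_add)
    also have "2 + (- (2 * s + 4)) + (2 * s + 2) = 0" by simp
    finally show ?thesis using np by simp
  qed
  finally show ?thesis by simp
qed

lemma pointwise:
  assumes s: "s > -1"
  shows "\<exists>C>0. \<forall>n\<ge>1. \<forall>x\<ge>1. Kdiag n s x \<le> C * x powr (-(s+2))"
proof -
  obtain C1 where C1: "C1 > 0" "\<And>n. n \<ge> 1 \<Longrightarrow> (\<Sum>k<n. (s + 2 * real k + 1) * (pochhammer (s + 1) k / fact k)^2)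
           \<le> C1 * real n powr (2 * s + 2)"
    using S_bound[OF s] by blast
  show ?thesis
  proof (intro exI[of _ "(EJ s)^2 * C1"] conjI allI impI)
    show "(EJ s)^2 * C1 > 0" using EJ_pos[OF s] C1 by simp
    fix n :: nat and x :: real assume n: "n \<ge> 1" and x: "x \<ge> 1"
    define Q where "Q = (real n)^2 * ((real n)^2 * x + 1) powr (-(s+2))"
    have Q0: "Q \<ge> 0" unfolding Q_def by simp
    have "Kdiag n s x \<le> (\<Sum>k<n. (Jf n s k x)^2)" using Kdiag_le[OF s] n x by simp
    also have "\<dots> \<le> Q * (EJ s)^2 * (\<Sum>k<n. (s + 2 * real k + 1) * (pochhammer (s + 1) k / fact k)^2)"
      using Jsum_bound[OF s n x] by (simp add: Q_def)
    also have "\<dots> \<le> Q * (EJ s)^2 * (C1 * real n powr (2 * s + 2))"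
      using C1(2)[OF n] Q0 by (intro mult_left_mono) auto
    also have "\<dots> = (EJ s)^2 * C1 * (Q * real n powr (2 * s + 2))" by (simp add: algebra_simps)
    also have "\<dots> \<le> (EJ s)^2 * C1 * x powr (-(s+2))"
      using scale_bound[OF s n x] C1(1) unfolding Q_def by (intro mult_left_mono) auto
    finally show "Kdiag n s x \<le> (EJ s)^2 * C1 * x powr (-(s+2))" .
  qed
qed



lemma tail_nn:
  fixes C s R :: real
  assumes s: "s > -1" and R: "R > 0" and C: "C > 0"
  shows "(\<integral>\<^sup>+x. ennreal (C * x powr (-(s+2))) * indicator {R..} x \<partial>lborel) = ennreal (C * R powr (-(s+1)) / (s+1))"
proof -
  define F where "F x = - C * x powr (-(s+1)) / (s+1)" for x
  have "(\<integral>\<^sup>+x. ennreal (C * x powr (-(s+2))) * indicator {R..} x \<partial>lborel) = 0 - F R"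
  proof (rule nn_integral_FTC_atLeast)
    show "(\<lambda>x. C * x powr (-(s+2))) \<in> borel_measurable borel" by measurable
    show "DERIV F x :> C * x powr (-(s+2))" if "R \<le> x" for x
    proof -
      have x: "x > 0" using that R by simp
      have "DERIV F x :> - C * ((-(s+1)) * x powr (-(s+1) - 1)) / (s+1)"
        unfolding F_def using x s by (auto intro!: derivative_eq_intros)
      also have "- C * ((-(s+1)) * x powr (-(s+1) - 1)) / (s+1) = C * x powr (-(s+2))"
        using s by (simp add: field_simps)
      finally show ?thesis .
    qed
    show "0 \<le> C * x powr (-(s+2))" for x using C by simp
    show "(F \<longlongrightarrow> 0) at_top" unfolding F_def using s by real_asymp
  qed
  also have "0 - F R = C * R powr (-(s+1)) / (s+1)" by (simp add: F_def)
  finally show ?thesis .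
qed

theorem mainTheorem1:
  fixes s :: real
  assumes "s > -1"
  shows "\<forall>\<epsilon>>0. \<exists>R>0.
           (SUP n\<in>{1::nat..}. \<integral>\<^sup>+ x. ennreal (Kdiag n s x) * indicator {R..} x \<partial>lborel)
             < ennreal \<epsilon>"
proof (intro allI impI)
  fix \<epsilon> :: real assume e: "\<epsilon> > 0"
  have s: "s > -1" by (rule assms)
  obtain C where C: "C > 0" "\<And>n x. n \<ge> 1 \<Longrightarrow> x \<ge> 1 \<Longrightarrow> Kdiag n s x \<le> C * x powr (-(s+2))"
    using pointwise[OF s] by blast
  define A where "A = (2 * C / ((s+1) * \<epsilon>)) powr (1 / (s+1))"
  define R where "R = max 1 A"
  have s1: "s + 1 > 0" using s by simp
  have A: "A > 0" unfolding A_def using C e s1 by simp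
  have R1: "R \<ge> 1" and RA: "R \<ge> A" unfolding R_def by auto
  have R0: "R > 0" using R1 by simp
  have "R powr (s+1) \<ge> A powr (s+1)" using RA A s1 by (intro powr_mono2) auto
  moreover have "A powr (s+1) = 2 * C / ((s+1) * \<epsilon>)"
    unfolding A_def using C e s1 by (simp add: powr_powr)
  ultimately have Rp: "R powr (s+1) \<ge> 2 * C / ((s+1) * \<epsilon>)" by simp
  have bound: "C * R powr (-(s+1)) / (s+1) \<le> \<epsilon> / 2"
  proof -
    have Rpp: "R powr (s+1) > 0" using R0 by simp
    have "C * R powr (-(s+1)) / (s+1) = C / ((s+1) * R powr (s+1))"
      unfolding powr_minus[of R "s+1"] using Rpp s1 by (simp add: field_simps)
    also have "\<dots> \<le> \<epsilon> / 2"
    proof -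
      have pp: "(s+1) * \<epsilon> > 0" using s1 e by simp
      have h: "2 * C \<le> R powr (s+1) * ((s+1) * \<epsilon>)" using Rp pp by (simp add: pos_divide_le_eq)
      have pq: "(s+1) * R powr (s+1) > 0" using s1 Rpp by simp
      show ?thesis using h pq by (simp add: pos_divide_le_eq algebra_simps)
    qed
    finally show ?thesis .
  qed
  have each: "(\<integral>\<^sup>+ x. ennreal (Kdiag n s x) * indicator {R..} x \<partial>lborel) \<le> ennreal (\<epsilon> / 2)"
    if n: "n \<in> {1::nat..}" for n
  proof -
    have "(\<integral>\<^sup>+ x. ennreal (Kdiag n s x) * indicator {R..} x \<partial>lborel)
        \<le> (\<integral>\<^sup>+x. ennreal (C * x powr (-(s+2))) * indicator {R..} x \<partial>lborel)"
    proof (rule nn_integral_mono)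
      fix x
      show "ennreal (Kdiag n s x) * indicator {R..} x \<le> ennreal (C * x powr (-(s+2))) * indicator {R..} x"
      proof (cases "x \<in> {R..}")
        case True
        then have "x \<ge> 1" using R1 by simp
        then have "Kdiag n s x \<le> C * x powr (-(s+2))" using C(2) n by simp
        then show ?thesis using True by (simp add: ennreal_leI)
      qed simp
    qed
    also have "\<dots> = ennreal (C * R powr (-(s+1)) / (s+1))" by (rule tail_nn[OF s R0 C(1)])
    also have "\<dots> \<le> ennreal (\<epsilon> / 2)" using bound by (rule ennreal_leI)
    finally show ?thesis .
  qed
  have "(SUP n\<in>{1::nat..}. \<integral>\<^sup>+ x. ennreal (Kdiag n s x) * indicator {R..} x \<partial>lborel) \<le> ennreal (\<epsilon> / 2)"
    by (rule SUP_least) (rule each)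
  also have "\<dots> < ennreal \<epsilon>" using e by (intro ennreal_lessI) auto
  finally show "\<exists>R>0. (SUP n\<in>{1::nat..}. \<integral>\<^sup>+ x. ennreal (Kdiag n s x) * indicator {R..} x \<partial>lborel) < ennreal \<epsilon>"
    using R0 by blast
qed


end
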